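(* Let $(\mathscr{M},g)$ be a smooth complete Riemannian manifold, $x_0\in\mathscr M$, $r>0$, and $u\in C(\overline B_r(x_0))$. Suppose $u(y_0)=l$ for some $y_0\in\overline B_{r/2}(x_0)$, that $u\ge t$ on $\overline B_r(x_0)\setminus B_{5r/6}(x_0)$, and that $l<t$. Then for every $a\ge0$, \[ A\big(a,\overline B_{r/6}(y_0)/B_r(x_0),u\big)\subset B_{5r/6}(x_0)\cap\Big\{u\le l+\frac{ar^2}{36}\Big\}. \]
   Context: $\rho$ is the Riemannian distance and $B_s(z)$ the geodesic ball. For a domain $\Omega$, $u\in C(\overline\Omega)$, $a\ge0$ and compact $E$, $A(a,E/\Omega,u)$ is the set of $x\in\overline\Omega$ such that for some $y\in E$, $\inf_{\overline\Omega}\{u+\frac a2\rho^2(\cdot,y)\}=u(x)+\frac a2\rho^2(x,y)$. *)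

theory Defs
  imports "HOL-Analysis.Analysis"
begin

definition contact_set :: "real \<Rightarrow> 'a::metric_space set \<Rightarrow> 'a set \<Rightarrow> ('a \<Rightarrow> real) \<Rightarrow> 'a set" where
  "contact_set a E \<Omega> u =
     {x \<in> closure \<Omega>. \<exists>y\<in>E. \<forall>z\<in>closure \<Omega>.
        u x + a / 2 * (dist x y)\<^sup>2 \<le> u z + a / 2 * (dist z y)\<^sup>2}"

end

theory Submission
  imports Defs
begin

theorem lemma3p3:
  fixes x0 y0 :: "'a::metric_space" and u :: "'a \<Rightarrow> real" and r l t :: real
  assumes "r > 0"
    and "continuous_on (closure (ball x0 r)) u"
    and "y0 \<in> cball x0 (r / 2)"
    and "u y0 = l"
    and "\<forall>x \<in> closure (ball x0 r) - ball x0 (5 * r / 6). u x \<ge> t"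
    and "l < t"
  shows "\<forall>a \<ge> 0. contact_set a (cball y0 (r / 6)) (ball x0 r) u
           \<subseteq> ball x0 (5 * r / 6) \<inter> {x. u x \<le> l + a * r\<^sup>2 / 36}"
proof (intro allI impI subsetI)
  fix a x assume a: "a \<ge> 0" and x: "x \<in> contact_set a (cball y0 (r / 6)) (ball x0 r) u"
  then obtain y where xc: "x \<in> closure (ball x0 r)" and y: "dist y0 y \<le> r/6"
    and min: "\<forall>z\<in>closure (ball x0 r). u x + a / 2 * (dist x y)\<^sup>2 \<le> u z + a / 2 * (dist z y)\<^sup>2"
    unfolding contact_set_def by auto
  have "y0 \<in> ball x0 r" using assms(1,3) by auto
  hence "y0 \<in> closure (ball x0 r)" using closure_subset by blast
  hence key: "u x + a / 2 * (dist x y)\<^sup>2 \<le> l + a / 2 * (dist y0 y)\<^sup>2"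
    using min assms(4) by auto
  have d2: "(dist y0 y)\<^sup>2 \<le> (r/6)\<^sup>2" using y by (simp add: power_mono)
  have "u x \<le> l + a * r\<^sup>2 / 36"
  proof -
    have "a / 2 * (dist y0 y)\<^sup>2 \<le> a/2 * (r/6)\<^sup>2" using d2 a by (simp add: mult_left_mono)
    moreover have "a / 2 * (dist x y)\<^sup>2 \<ge> 0" using a by simp
    moreover have "a/2 * (r/6)\<^sup>2 \<le> a * r\<^sup>2 / 36" using a by (simp add: power_divide)
    ultimately show ?thesis using key by linarith
  qed
  moreover have "x \<in> ball x0 (5 * r / 6)"
  proof (rule ccontr)
    assume nx: "x \<notin> ball x0 (5 * r / 6)"
    hence ux: "u x \<ge> t" using assms(5) xc by auto
    have "dist x0 x \<ge> 5*r/6" using nx by auto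
    moreover have "dist x0 y \<le> 2*r/3" using assms(3) y dist_triangle[of x0 y y0] by auto
    ultimately have "dist x y \<ge> r/6" using dist_triangle[of x0 x y] by (simp add: dist_commute)
    hence "dist y0 y \<le> dist x y" using y by linarith
    hence "(dist y0 y)\<^sup>2 \<le> (dist x y)\<^sup>2" by (simp add: power_mono)
    hence "a / 2 * (dist y0 y)\<^sup>2 \<le> a / 2 * (dist x y)\<^sup>2" using a by (simp add: mult_left_mono)
    hence "u x \<le> l" using key by linarith
    thus False using ux assms(6) by linarith
  qed
  ultimately show "x \<in> ball x0 (5 * r / 6) \<inter> {x. u x \<le> l + a * r\<^sup>2 / 36}" by auto
qed

end
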